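(* Any expressivity situation $\mathscr{S}$ is adequate: for every $B$-coalgebra $x\colon X\to BX$ one has $\nu\bigl(x^*\circ\overline{B}^{\underline{\Omega},\tau}\bigr)\sqsubseteq\bigwedge_{\varphi\in L_{\mathscr{S}}}[\![\varphi]\!]_x^{*}\underline{\Omega}$ in the fiber $\mathcal{E}_X$.
   Context: An expressivity situation $\mathscr{S}=(p,B,\Omega,\underline{\Omega},\Sigma,\Lambda,(f_\sigma)_{\sigma\in\Sigma},(\tau_\lambda)_{\lambda\in\Lambda})$ consists of: a fibration $p\colon\mathcal{E}\to\mathcal{C}$ whose fibers $\mathcal{E}_X$ are complete lattices (order $\sqsubseteq$, meets written $\bigwedge$, top $\top$) and whose reindexing functors $f^*$ preserve arbitrary meets; a functor $B\colon\mathcal{C}\to\mathcal{C}$; an object $\Omega\in\mathcal{C}$ with finite powers and an object $\underline{\Omega}\in\mathcal{E}$ above $\Omega$; a ranked alphabet $\Sigma$ with arrows $f_\sigma\colon\Omega^{\mathrm{rank}(\sigma)}\to\Omega$, each having a lifting $g_\sigma\colon\underline{\Omega}^{\mathrm{rank}(\sigma)}\to\underline{\Omega}$ in $\mathcal{E}$ with $pg_\sigma=f_\sigma$; a set $\Lambda$ and arrows $\tau_\lambda\colon B\Omega\to\Omega$. The logic $L_{\mathscr{S}}$ has formulas $\varphi::=\sigma(\varphi_1,\dots,\varphi_{\mathrm{rank}(\sigma)})\ (\sigma\in\Sigma)\mid\heartsuit_\lambda\varphi\ (\lambda\in\Lambda)$, interpreted on a coalgebra $x\colon X\to BX$ by $[\![\sigma(\varphi_1,\dots)]\!]_x=f_\sigma\circ\langle[\![\varphi_1]\!]_x,\dots\rangle$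 and $[\![\heartsuit_\lambda\varphi]\!]_x=\tau_\lambda\circ B[\![\varphi]\!]_x\circ x$. The codensity lifting is $\overline{B}^{\underline{\Omega},\tau}P=\bigwedge_{\lambda\in\Lambda,\,h\in\mathcal{E}(P,\underline{\Omega})}(\tau_\lambda\circ B(ph))^*\underline{\Omega}$, and the codensity bisimilarity of $x$ is the greatest fixed point $\nu(x^*\circ\overline{B}^{\underline{\Omega},\tau})$ of the monotone map $x^*\circ\overline{B}^{\underline{\Omega},\tau}$ on $\mathcal{E}_X$. The right-hand side of the claim is the fibrational logical equivalence of $x$. *)

theory Defs
  imports Main
begin

record ('o, 'a) category_data =
  obj   :: "'o set"
  arr   :: "'a set"
  dom   :: "'a \<Rightarrow> 'o"
  cod   :: "'a \<Rightarrow> 'o"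
  comp  :: "'a \<Rightarrow> 'a \<Rightarrow> 'a"   (* comp C g f = g \<circ> f *)
  ident :: "'o \<Rightarrow> 'a"

definition hom :: "('o, 'a) category_data \<Rightarrow> 'o \<Rightarrow> 'o \<Rightarrow> 'a set" where
  "hom C X Y = {f \<in> arr C. dom C f = X \<and> cod C f = Y}"

definition is_category :: "('o, 'a) category_data \<Rightarrow> bool" where
  "is_category C \<longleftrightarrow>
     (\<forall>f\<in>arr C. dom C f \<in> obj C \<and> cod C f \<in> obj C) \<and>
     (\<forall>X\<in>obj C. ident C X \<in> hom C X X) \<and>
     (\<forall>f g. f \<in> arr C \<and> g \<in> arr C \<and> cod C f = dom C g \<longrightarrow>
            comp C g f \<in> hom C (dom C f) (cod C g)) \<and>
     (\<forall>f\<in>arr C. comp C (ident C (cod C f)) f = f \<and> comp C f (ident C (dom C f)) = f) \<and>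
     (\<forall>f g h. f \<in> arr C \<and> g \<in> arr C \<and> h \<in> arr C \<and> cod C f = dom C g \<and> cod C g = dom C h
            \<longrightarrow> comp C h (comp C g f) = comp C (comp C h g) f)"

definition is_endofunctor ::
  "('o, 'a) category_data \<Rightarrow> ('o \<Rightarrow> 'o) \<Rightarrow> ('a \<Rightarrow> 'a) \<Rightarrow> bool" where
  "is_endofunctor C Fo Fa \<longleftrightarrow>
     (\<forall>X\<in>obj C. Fo X \<in> obj C) \<and>
     (\<forall>X Y f. f \<in> hom C X Y \<longrightarrow> Fa f \<in> hom C (Fo X) (Fo Y)) \<and>
     (\<forall>X\<in>obj C. Fa (ident C X) = ident C (Fo X)) \<and>
     (\<forall>f g. f \<in> arr C \<and> g \<in> arr C \<and> cod C f = dom C g \<longrightarrow>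
            Fa (comp C g f) = comp C (Fa g) (Fa f))"

definition is_power ::
  "('o, 'a) category_data \<Rightarrow> 'o \<Rightarrow> nat \<Rightarrow> 'o \<Rightarrow> (nat \<Rightarrow> 'a) \<Rightarrow> bool" where
  "is_power C Om n P pr \<longleftrightarrow>
     P \<in> obj C \<and> (\<forall>i<n. pr i \<in> hom C P Om) \<and>
     (\<forall>X\<in>obj C. \<forall>fs. (\<forall>i<n. fs i \<in> hom C X Om) \<longrightarrow>
        (\<exists>!h. h \<in> hom C X P \<and> (\<forall>i<n. comp C (pr i) h = fs i)))"

definition has_finite_powers ::
  "('o, 'a) category_data \<Rightarrow> 'o \<Rightarrow> (nat \<Rightarrow> 'o) \<Rightarrow> (nat \<Rightarrow> nat \<Rightarrow> 'a) \<Rightarrow> bool" where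
  "has_finite_powers C Om pw prj \<longleftrightarrow> (\<forall>n. is_power C Om n (pw n) (prj n))"

definition tuple ::
  "('o, 'a) category_data \<Rightarrow> (nat \<Rightarrow> 'o) \<Rightarrow> (nat \<Rightarrow> nat \<Rightarrow> 'a) \<Rightarrow> 'o \<Rightarrow> nat \<Rightarrow> (nat \<Rightarrow> 'a) \<Rightarrow> 'a" where
  "tuple C pw prj X n fs =
     (THE h. h \<in> hom C X (pw n) \<and> (\<forall>i<n. comp C (prj n i) h = fs i))"

section \<open>CLat-meet fibrations, presented as indexed complete lattices\<close>

record ('o, 'a, 'e) clat_fibration =
  fib   :: "'o \<Rightarrow> 'e set"
  leq   :: "'o \<Rightarrow> 'e \<Rightarrow> 'e \<Rightarrow> bool"
  meet  :: "'o \<Rightarrow> 'e set \<Rightarrow> 'e"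
  reidx :: "'a \<Rightarrow> 'e \<Rightarrow> 'e"

definition is_clat_fibration ::
  "('o, 'a) category_data \<Rightarrow> ('o, 'a, 'e) clat_fibration \<Rightarrow> bool" where
  "is_clat_fibration C E \<longleftrightarrow>
     (\<forall>X\<in>obj C.
        (\<forall>P\<in>fib E X. leq E X P P) \<and>
        (\<forall>P\<in>fib E X. \<forall>Q\<in>fib E X. leq E X P Q \<and> leq E X Q P \<longrightarrow> P = Q) \<and>
        (\<forall>P\<in>fib E X. \<forall>Q\<in>fib E X. \<forall>R\<in>fib E X. leq E X P Q \<and> leq E X Q R \<longrightarrow> leq E X P R) \<and>
        (\<forall>S. S \<subseteq> fib E X \<longrightarrow>
            meet E X S \<in> fib E X \<and> (\<forall>s\<in>S. leq E X (meet E X S) s) \<and>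
            (\<forall>y\<in>fib E X. (\<forall>s\<in>S. leq E X y s) \<longrightarrow> leq E X y (meet E X S)))) \<and>
     (\<forall>X Y f. f \<in> hom C X Y \<longrightarrow>
        (\<forall>P\<in>fib E Y. reidx E f P \<in> fib E X) \<and>
        (\<forall>S. S \<subseteq> fib E Y \<longrightarrow> reidx E f (meet E Y S) = meet E X (reidx E f ` S))) \<and>
     (\<forall>X\<in>obj C. \<forall>P\<in>fib E X. reidx E (ident C X) P = P) \<and>
     (\<forall>X Y Z f g. f \<in> hom C X Y \<and> g \<in> hom C Y Z \<longrightarrow>
        (\<forall>P\<in>fib E Z. reidx E (comp C g f) P = reidx E f (reidx E g P)))"

text \<open>Images under p of the arrows P \<rightarrow> Q of the total category (P above X, Q above Y):
  an arrow f : X \<rightarrow> Y underlies a (unique) arrow P \<rightarrow> Q iff P \<sqsubseteq> f^* Q.\<close>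
definition ehom ::
  "('o, 'a) category_data \<Rightarrow> ('o, 'a, 'e) clat_fibration \<Rightarrow> 'o \<Rightarrow> 'e \<Rightarrow> 'o \<Rightarrow> 'e \<Rightarrow> 'a set" where
  "ehom C E X P Y Q = {f \<in> hom C X Y. leq E X P (reidx E f Q)}"

definition expressivity_situation ::
  "('o, 'a) category_data \<Rightarrow> ('o, 'a, 'e) clat_fibration \<Rightarrow> ('o \<Rightarrow> 'o) \<Rightarrow> ('a \<Rightarrow> 'a) \<Rightarrow>
   'o \<Rightarrow> 'e \<Rightarrow> (nat \<Rightarrow> 'o) \<Rightarrow> (nat \<Rightarrow> nat \<Rightarrow> 'a) \<Rightarrow>
   's set \<Rightarrow> ('s \<Rightarrow> nat) \<Rightarrow> ('s \<Rightarrow> 'a) \<Rightarrow> 'l set \<Rightarrow> ('l \<Rightarrow> 'a) \<Rightarrow> bool" where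
  "expressivity_situation C E Bo Ba Om OmE pw prj Sig rank f Lam tau \<longleftrightarrow>
     is_category C \<and> is_clat_fibration C E \<and> is_endofunctor C Bo Ba \<and>
     Om \<in> obj C \<and> has_finite_powers C Om pw prj \<and> OmE \<in> fib E Om \<and>
     (\<forall>s\<in>Sig. f s \<in> hom C (pw (rank s)) Om \<and>
        \<comment> \<open>lifting g_s : OmE^rank(s) \<rightarrow> OmE above f s, where OmE^n = \<And>_i pi_i^* OmE
            is the n-th power of OmE in the total category\<close>
        f s \<in> ehom C E (pw (rank s))
                 (meet E (pw (rank s)) {reidx E (prj (rank s) i) OmE | i. i < rank s})
                 Om OmE) \<and>
     (\<forall>l\<in>Lam. tau l \<in> hom C (Bo Om) Om)"

datatype ('s, 'l) formula = Op 's "('s, 'l) formula list" | Mod 'l "('s, 'l) formula"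

fun wf_formula :: "'s set \<Rightarrow> ('s \<Rightarrow> nat) \<Rightarrow> 'l set \<Rightarrow> ('s, 'l) formula \<Rightarrow> bool" where
  "wf_formula Sig rank Lam (Op s ps) =
     (s \<in> Sig \<and> length ps = rank s \<and> (\<forall>p\<in>set ps. wf_formula Sig rank Lam p))"
| "wf_formula Sig rank Lam (Mod l p) = (l \<in> Lam \<and> wf_formula Sig rank Lam p)"

fun sem ::
  "('o, 'a) category_data \<Rightarrow> ('a \<Rightarrow> 'a) \<Rightarrow> (nat \<Rightarrow> 'o) \<Rightarrow> (nat \<Rightarrow> nat \<Rightarrow> 'a) \<Rightarrow>
   ('s \<Rightarrow> nat) \<Rightarrow> ('s \<Rightarrow> 'a) \<Rightarrow> ('l \<Rightarrow> 'a) \<Rightarrow> 'o \<Rightarrow> 'a \<Rightarrow> ('s, 'l) formula \<Rightarrow> 'a" where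
  "sem C Ba pw prj rank f tau X x (Op s ps) =
     comp C (f s) (tuple C pw prj X (rank s) (\<lambda>i. map (sem C Ba pw prj rank f tau X x) ps ! i))"
| "sem C Ba pw prj rank f tau X x (Mod l p) =
     comp C (tau l) (comp C (Ba (sem C Ba pw prj rank f tau X x p)) x)"

definition codensity_lifting ::
  "('o, 'a) category_data \<Rightarrow> ('o, 'a, 'e) clat_fibration \<Rightarrow> ('o \<Rightarrow> 'o) \<Rightarrow> ('a \<Rightarrow> 'a) \<Rightarrow>
   'o \<Rightarrow> 'e \<Rightarrow> 'l set \<Rightarrow> ('l \<Rightarrow> 'a) \<Rightarrow> 'o \<Rightarrow> 'e \<Rightarrow> 'e" where
  "codensity_lifting C E Bo Ba Om OmE Lam tau X P =
     meet E (Bo X) {reidx E (comp C (tau l) (Ba h)) OmE | l h. l \<in> Lam \<and> h \<in> ehom C E X P Om OmE}"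

definition fib_gfp :: "('o, 'a, 'e) clat_fibration \<Rightarrow> 'o \<Rightarrow> ('e \<Rightarrow> 'e) \<Rightarrow> 'e" where
  "fib_gfp E X F = (THE R. R \<in> fib E X \<and> F R = R \<and> (\<forall>S\<in>fib E X. F S = S \<longrightarrow> leq E X S R))"

definition codensity_bisim ::
  "('o, 'a) category_data \<Rightarrow> ('o, 'a, 'e) clat_fibration \<Rightarrow> ('o \<Rightarrow> 'o) \<Rightarrow> ('a \<Rightarrow> 'a) \<Rightarrow>
   'o \<Rightarrow> 'e \<Rightarrow> 'l set \<Rightarrow> ('l \<Rightarrow> 'a) \<Rightarrow> 'o \<Rightarrow> 'a \<Rightarrow> 'e" where
  "codensity_bisim C E Bo Ba Om OmE Lam tau X x =
     fib_gfp E X (\<lambda>R. reidx E x (codensity_lifting C E Bo Ba Om OmE Lam tau X R))"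

definition logical_equiv ::
  "('o, 'a) category_data \<Rightarrow> ('o, 'a, 'e) clat_fibration \<Rightarrow> ('a \<Rightarrow> 'a) \<Rightarrow> 'e \<Rightarrow>
   (nat \<Rightarrow> 'o) \<Rightarrow> (nat \<Rightarrow> nat \<Rightarrow> 'a) \<Rightarrow> 's set \<Rightarrow> ('s \<Rightarrow> nat) \<Rightarrow> ('s \<Rightarrow> 'a) \<Rightarrow>
   'l set \<Rightarrow> ('l \<Rightarrow> 'a) \<Rightarrow> 'o \<Rightarrow> 'a \<Rightarrow> 'e" where
  "logical_equiv C E Ba OmE pw prj Sig rank f Lam tau X x =
     meet E X {reidx E (sem C Ba pw prj rank f tau X x phi) OmE | phi. wf_formula Sig rank Lam phi}"

end

theory Submission
  imports Defs
begin

lemma kt_gfp: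
  assumes refl: "\<And>P. P \<in> A \<Longrightarrow> le P P"
    and anti: "\<And>P Q. P \<in> A \<Longrightarrow> Q \<in> A \<Longrightarrow> le P Q \<Longrightarrow> le Q P \<Longrightarrow> P = Q"
    and trans: "\<And>P Q R. P \<in> A \<Longrightarrow> Q \<in> A \<Longrightarrow> R \<in> A \<Longrightarrow> le P Q \<Longrightarrow> le Q R \<Longrightarrow> le P R"
    and mA: "\<And>S. S \<subseteq> A \<Longrightarrow> mt S \<in> A"
    and mlb: "\<And>S s. S \<subseteq> A \<Longrightarrow> s \<in> S \<Longrightarrow> le (mt S) s"
    and mglb: "\<And>S y. S \<subseteq> A \<Longrightarrow> y \<in> A \<Longrightarrow> (\<And>s. s \<in> S \<Longrightarrow> le y s) \<Longrightarrow> le y (mt S)"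
    and FA: "\<And>P. P \<in> A \<Longrightarrow> F P \<in> A"
    and Fmono: "\<And>P Q. P \<in> A \<Longrightarrow> Q \<in> A \<Longrightarrow> le P Q \<Longrightarrow> le (F P) (F Q)"
  shows "\<exists>!R. R \<in> A \<and> F R = R \<and> (\<forall>S\<in>A. F S = S \<longrightarrow> le S R)"
proof -
  define S where "S = {y \<in> A. le y (F y)}"
  define U where "U = {u \<in> A. \<forall>s\<in>S. le s u}"
  define G where "G = mt U"
  have UA: "U \<subseteq> A" unfolding U_def by auto
  have GA: "G \<in> A" unfolding G_def using mA[OF UA] .
  have sG: "le s G" if "s \<in> S" for s
    unfolding G_def using that by (intro mglb[OF UA]) (auto simp: U_def S_def)
  have FGU: "F G \<in> U"
  proof -
    have "le s (F G)" if "s \<in> S" for s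
    proof -
      have sA: "s \<in> A" "le s (F s)" using that by (auto simp: S_def)
      have "le (F s) (F G)" using Fmono[OF sA(1) GA sG[OF that]] .
      then show ?thesis using trans[OF sA(1) FA[OF sA(1)] FA[OF GA]] sA(2) by blast
    qed
    then show ?thesis using FA[OF GA] by (auto simp: U_def)
  qed
  have GFG: "le G (F G)" unfolding G_def using mlb[OF UA FGU] by (simp add: G_def)
  have "F G \<in> S" using FA[OF GA] Fmono[OF GA FA[OF GA] GFG] by (auto simp: S_def)
  then have "le (F G) G" by (rule sG)
  then have fxp: "F G = G" using anti[OF FA[OF GA] GA] GFG by blast
  have great: "\<forall>T\<in>A. F T = T \<longrightarrow> le T G"
    using sG refl by (auto simp: S_def)
  show ?thesis
  proof (rule ex1I[of _ G])
    show "G \<in> A \<and> F G = G \<and> (\<forall>S\<in>A. F S = S \<longrightarrow> le S G)" using GA fxp great by blast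
  next
    fix R assume R: "R \<in> A \<and> F R = R \<and> (\<forall>S\<in>A. F S = S \<longrightarrow> le S R)"
    then show "R = G" using anti[of R G] GA fxp great by blast
  qed
qed

context
  fixes C :: "('o, 'a) category_data" and E :: "('o, 'a, 'e) clat_fibration"
  assumes cat: "is_category C" and fibr: "is_clat_fibration C E"
begin

lemma hom_obj: "f \<in> hom C X Y \<Longrightarrow> X \<in> obj C \<and> Y \<in> obj C"
  using cat[unfolded is_category_def, THEN conjunct1] unfolding hom_def by blast

lemma comp_hom: "f \<in> hom C X Y \<Longrightarrow> g \<in> hom C Y Z \<Longrightarrow> comp C g f \<in> hom C X Z"
  using cat[unfolded is_category_def, THEN conjunct2, THEN conjunct2, THEN conjunct1]
  unfolding hom_def by auto

lemma assoc: "f \<in> hom C X Y \<Longrightarrow> g \<in> hom C Y Z \<Longrightarrow> h \<in> hom C Z W \<Longrightarrow>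
   comp C h (comp C g f) = comp C (comp C h g) f"
  using cat[unfolded is_category_def, THEN conjunct2, THEN conjunct2, THEN conjunct2, THEN conjunct2]
  unfolding hom_def by auto

lemma F1: "X \<in> obj C \<Longrightarrow> (\<forall>P\<in>fib E X. leq E X P P) \<and>
        (\<forall>P\<in>fib E X. \<forall>Q\<in>fib E X. leq E X P Q \<and> leq E X Q P \<longrightarrow> P = Q) \<and>
        (\<forall>P\<in>fib E X. \<forall>Q\<in>fib E X. \<forall>R\<in>fib E X. leq E X P Q \<and> leq E X Q R \<longrightarrow> leq E X P R) \<and>
        (\<forall>S. S \<subseteq> fib E X \<longrightarrow>
            meet E X S \<in> fib E X \<and> (\<forall>s\<in>S. leq E X (meet E X S) s) \<and>
            (\<forall>y\<in>fib E X. (\<forall>s\<in>S. leq E X y s) \<longrightarrow> leq E X y (meet E X S)))"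
  using fibr[unfolded is_clat_fibration_def, THEN conjunct1] by (rule bspec)

lemma F2: "f \<in> hom C X Y \<Longrightarrow>
        (\<forall>P\<in>fib E Y. reidx E f P \<in> fib E X) \<and>
        (\<forall>S. S \<subseteq> fib E Y \<longrightarrow> reidx E f (meet E Y S) = meet E X (reidx E f ` S))"
  using fibr[unfolded is_clat_fibration_def, THEN conjunct2, THEN conjunct1] by blast

lemma F4: "f \<in> hom C X Y \<Longrightarrow> g \<in> hom C Y Z \<Longrightarrow>
        (\<forall>P\<in>fib E Z. reidx E (comp C g f) P = reidx E f (reidx E g P))"
  using fibr[unfolded is_clat_fibration_def, THEN conjunct2, THEN conjunct2, THEN conjunct2] by blast

lemma f_refl: "X \<in> obj C \<Longrightarrow> P \<in> fib E X \<Longrightarrow> leq E X P P"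
  by (drule F1, drule conjunct1, erule bspec)
lemma f_anti: assumes "X \<in> obj C" "P \<in> fib E X" "Q \<in> fib E X" "leq E X P Q" "leq E X Q P" shows "P = Q"
proof -
  have h: "\<forall>P\<in>fib E X. \<forall>Q\<in>fib E X. leq E X P Q \<and> leq E X Q P \<longrightarrow> P = Q"
    using F1[OF assms(1)] by (elim conjE)
  show ?thesis using h assms(2-5) by blast
qed
lemma f_trans: assumes "X \<in> obj C" "P \<in> fib E X" "Q \<in> fib E X" "R \<in> fib E X" "leq E X P Q" "leq E X Q R" shows "leq E X P R"
proof -
  have h: "\<forall>P\<in>fib E X. \<forall>Q\<in>fib E X. \<forall>R\<in>fib E X. leq E X P Q \<and> leq E X Q R \<longrightarrow> leq E X P R"
    using F1[OF assms(1)] by (elim conjE)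
  show ?thesis using h assms(2-6) by blast
qed
lemma F1m: "X \<in> obj C \<Longrightarrow> S \<subseteq> fib E X \<Longrightarrow> meet E X S \<in> fib E X \<and> (\<forall>s\<in>S. leq E X (meet E X S) s) \<and>
            (\<forall>y\<in>fib E X. (\<forall>s\<in>S. leq E X y s) \<longrightarrow> leq E X y (meet E X S))"
  apply (drule F1, drule conjunct2, drule conjunct2, drule conjunct2)
  apply (erule allE, erule mp, assumption)
  done
lemma f_mA: "X \<in> obj C \<Longrightarrow> S \<subseteq> fib E X \<Longrightarrow> meet E X S \<in> fib E X"
  by (drule F1m, assumption, erule conjunct1)
lemma f_mlb: "X \<in> obj C \<Longrightarrow> S \<subseteq> fib E X \<Longrightarrow> s \<in> S \<Longrightarrow> leq E X (meet E X S) s"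
  apply (drule F1m, assumption, drule conjunct2, drule conjunct1)
  apply (erule bspec, assumption)
  done
lemma f_mglb: "X \<in> obj C \<Longrightarrow> S \<subseteq> fib E X \<Longrightarrow> y \<in> fib E X \<Longrightarrow> (\<And>s. s \<in> S \<Longrightarrow> leq E X y s) \<Longrightarrow> leq E X y (meet E X S)"
  apply (drule F1m, assumption, drule conjunct2, drule conjunct2)
  apply (drule bspec, assumption, erule mp)
  apply (rule ballI, simp)
  done
lemma r_fib: "f \<in> hom C X Y \<Longrightarrow> P \<in> fib E Y \<Longrightarrow> reidx E f P \<in> fib E X"
  by (drule F2, drule conjunct1, erule bspec)
lemma r_meet: "f \<in> hom C X Y \<Longrightarrow> S \<subseteq> fib E Y \<Longrightarrow> reidx E f (meet E Y S) = meet E X (reidx E f ` S)"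
  by (drule F2, drule conjunct2, erule allE, erule mp)
lemma r_comp: "f \<in> hom C X Y \<Longrightarrow> g \<in> hom C Y Z \<Longrightarrow> P \<in> fib E Z \<Longrightarrow>
   reidx E (comp C g f) P = reidx E f (reidx E g P)"
  by (drule F4, assumption, erule bspec)

lemma r_mono:
  assumes f: "f \<in> hom C X Y" and P: "P \<in> fib E Y" and Q: "Q \<in> fib E Y" and le: "leq E Y P Q"
  shows "leq E X (reidx E f P) (reidx E f Q)"
proof -
  have ob: "X \<in> obj C" "Y \<in> obj C" using hom_obj[OF f] by auto
  have sub: "{P, Q} \<subseteq> fib E Y" using P Q by auto
  have m: "meet E Y {P, Q} = P"
  proof (rule f_anti[OF ob(2) f_mA[OF ob(2) sub] P])
    show "leq E Y (meet E Y {P, Q}) P" by (rule f_mlb[OF ob(2) sub]) auto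
    show "leq E Y P (meet E Y {P, Q})"
      by (rule f_mglb[OF ob(2) sub P]) (use f_refl[OF ob(2) P] le in auto)
  qed
  have "reidx E f P = meet E X (reidx E f ` {P, Q})"
    using r_meet[OF f sub] m by simp
  moreover have "leq E X (meet E X (reidx E f ` {P, Q})) (reidx E f Q)"
    by (rule f_mlb[OF ob(1)]) (use r_fib[OF f] P Q in auto)
  ultimately show ?thesis by simp
qed

end

theorem mainTheorem1:
  assumes "expressivity_situation C E Bo Ba Om OmE pw prj Sig rank f Lam tau"
    and "X \<in> obj C"
    and "x \<in> hom C X (Bo X)"
  shows "leq E X (codensity_bisim C E Bo Ba Om OmE Lam tau X x)
                 (logical_equiv C E Ba OmE pw prj Sig rank f Lam tau X x)"
proof -
  note es = assms(1)[unfolded expressivity_situation_def]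
  have cat: "is_category C" by (insert es) (elim conjE, assumption)
  have fibr: "is_clat_fibration C E" by (insert es) (elim conjE, assumption)
  have endo: "is_endofunctor C Bo Ba" by (insert es) (elim conjE, assumption)
  have OmO: "Om \<in> obj C" by (insert es) (elim conjE, assumption)
  have pows: "has_finite_powers C Om pw prj" by (insert es) (elim conjE, assumption)
  have OmE: "OmE \<in> fib E Om" by (insert es) (elim conjE, assumption)
  have sigall: "\<forall>s\<in>Sig. f s \<in> hom C (pw (rank s)) Om \<and>
        f s \<in> ehom C E (pw (rank s))
                 (meet E (pw (rank s)) {reidx E (prj (rank s) i) OmE | i. i < rank s}) Om OmE"
    by (insert es) (elim conjE, assumption)
  have sig: "\<And>s. s \<in> Sig \<Longrightarrow> f s \<in> hom C (pw (rank s)) Om \<and>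
        f s \<in> ehom C E (pw (rank s))
                 (meet E (pw (rank s)) {reidx E (prj (rank s) i) OmE | i. i < rank s}) Om OmE"
    using sigall by (rule bspec)
  have tauall: "\<forall>l\<in>Lam. tau l \<in> hom C (Bo Om) Om" by (insert es) (elim conjE, assumption)
  have tauh: "\<And>l. l \<in> Lam \<Longrightarrow> tau l \<in> hom C (Bo Om) Om" using tauall by (rule bspec)
  have XO: "X \<in> obj C" by fact
  have xh: "x \<in> hom C X (Bo X)" by fact
  have BXO: "Bo X \<in> obj C" and BOmO: "Bo Om \<in> obj C" using endo XO OmO unfolding is_endofunctor_def by auto
  have Bah: "\<And>h Y Z. h \<in> hom C Y Z \<Longrightarrow> Ba h \<in> hom C (Bo Y) (Bo Z)"
    using endo unfolding is_endofunctor_def by auto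
  define L where "L R = {reidx E (comp C (tau l) (Ba h)) OmE | l h. l \<in> Lam \<and> h \<in> ehom C E X R Om OmE}" for R
  define F where "F R = reidx E x (codensity_lifting C E Bo Ba Om OmE Lam tau X R)" for R
  have Fdef: "F R = reidx E x (meet E (Bo X) (L R))" for R
    unfolding F_def L_def codensity_lifting_def by simp
  have elt: "reidx E (comp C (tau l) (Ba h)) OmE \<in> fib E (Bo X)" if "l \<in> Lam" "h \<in> hom C X Om" for l h
    by (rule r_fib[OF cat fibr comp_hom[OF cat fibr Bah[OF that(2)] tauh[OF that(1)]] OmE])
  have LA: "L R \<subseteq> fib E (Bo X)" for R
    unfolding L_def ehom_def using elt by auto
  have FA: "F R \<in> fib E X" for R
    unfolding Fdef by (rule r_fib[OF cat fibr xh f_mA[OF cat fibr BXO LA]])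
  have ehA: "reidx E h OmE \<in> fib E X" if "h \<in> hom C X Om" for h
    using r_fib[OF cat fibr that OmE] .
  have Fmono: "leq E X (F P) (F Q)" if P: "P \<in> fib E X" and Q: "Q \<in> fib E X" and le: "leq E X P Q" for P Q
  proof -
    have "L Q \<subseteq> L P"
    proof
      fix y assume "y \<in> L Q"
      then obtain l h where y: "y = reidx E (comp C (tau l) (Ba h)) OmE" "l \<in> Lam"
        "h \<in> hom C X Om" "leq E X Q (reidx E h OmE)"
        unfolding L_def ehom_def by auto
      have "leq E X P (reidx E h OmE)"
        using f_trans[OF cat fibr XO P Q ehA[OF y(3)] le y(4)] .
      then show "y \<in> L P" unfolding L_def ehom_def using y by blast
    qed
    then have "leq E (Bo X) (meet E (Bo X) (L P)) (meet E (Bo X) (L Q))"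
      using f_mglb[OF cat fibr BXO LA f_mA[OF cat fibr BXO LA]] f_mlb[OF cat fibr BXO LA]
      by blast
    then show ?thesis unfolding Fdef
      by (rule r_mono[OF cat fibr xh f_mA[OF cat fibr BXO LA] f_mA[OF cat fibr BXO LA]])
  qed
  have ex: "\<exists>!R. R \<in> fib E X \<and> F R = R \<and> (\<forall>S\<in>fib E X. F S = S \<longrightarrow> leq E X S R)"
    by (rule kt_gfp[OF f_refl[OF cat fibr XO] f_anti[OF cat fibr XO] f_trans[OF cat fibr XO]
          f_mA[OF cat fibr XO] f_mlb[OF cat fibr XO] f_mglb[OF cat fibr XO] FA Fmono])
  define G where "G = codensity_bisim C E Bo Ba Om OmE Lam tau X x"
  have Gp: "G \<in> fib E X \<and> F G = G \<and> (\<forall>S\<in>fib E X. F S = S \<longrightarrow> leq E X S G)"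
  proof -
    have "G = (THE R. R \<in> fib E X \<and> F R = R \<and> (\<forall>S\<in>fib E X. F S = S \<longrightarrow> leq E X S R))"
      unfolding G_def codensity_bisim_def fib_gfp_def F_def by simp
    then show ?thesis using theI'[OF ex] by simp
  qed
  then have GA: "G \<in> fib E X" and GF: "F G = G" by auto
  have key: "sem C Ba pw prj rank f tau X x phi \<in> hom C X Om \<and>
      leq E X G (reidx E (sem C Ba pw prj rank f tau X x phi) OmE)"
    if "wf_formula Sig rank Lam phi" for phi
    using that
  proof (induction phi)
    case (Op s ps)
    let ?sem = "sem C Ba pw prj rank f tau X x"
    define n where "n = rank s"
    define fs where "fs = (\<lambda>i. map ?sem ps ! i)"
    have sS: "s \<in> Sig" and len: "length ps = n" and wfp: "\<forall>p\<in>set ps. wf_formula Sig rank Lam p"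
      using Op.prems by (auto simp: n_def)
    have IH: "?sem (ps ! i) \<in> hom C X Om \<and> leq E X G (reidx E (?sem (ps ! i)) OmE)" if "i < n" for i
      using Op.IH[of "ps ! i"] wfp that len by auto
    have fsi: "fs i = ?sem (ps ! i)" if "i < n" for i using that len by (simp add: fs_def)
    have pw: "is_power C Om n (pw n) (prj n)" using pows unfolding has_finite_powers_def by blast
    have prjh: "\<And>i. i < n \<Longrightarrow> prj n i \<in> hom C (pw n) Om" using pw unfolding is_power_def by blast
    have pwO: "pw n \<in> obj C" using pw unfolding is_power_def by blast
    have "\<exists>!h. h \<in> hom C X (pw n) \<and> (\<forall>i<n. comp C (prj n i) h = fs i)"
      using pw XO IH fsi unfolding is_power_def by auto
    then have tp: "tuple C pw prj X n fs \<in> hom C X (pw n) \<and>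
        (\<forall>i<n. comp C (prj n i) (tuple C pw prj X n fs) = fs i)"
      unfolding tuple_def by (rule theI')
    define t where "t = tuple C pw prj X n fs"
    have th: "t \<in> hom C X (pw n)" and tc: "\<And>i. i < n \<Longrightarrow> comp C (prj n i) t = fs i"
      using tp by (auto simp: t_def)
    define Ps where "Ps = {reidx E (prj n i) OmE | i. i < n}"
    have PsA: "Ps \<subseteq> fib E (pw n)" unfolding Ps_def using r_fib[OF cat fibr prjh OmE] by auto
    have fsh: "f s \<in> hom C (pw n) Om" and fsl: "leq E (pw n) (meet E (pw n) Ps) (reidx E (f s) OmE)"
      using sig[OF sS] by (auto simp: n_def Ps_def ehom_def)
    have semeq: "?sem (Op s ps) = comp C (f s) t"
      by (simp add: t_def fs_def n_def)
    have semh: "comp C (f s) t \<in> hom C X Om" by (rule comp_hom[OF cat fibr th fsh])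
    have A1: "leq E X (reidx E t (meet E (pw n) Ps)) (reidx E t (reidx E (f s) OmE))"
      by (rule r_mono[OF cat fibr th f_mA[OF cat fibr pwO PsA] r_fib[OF cat fibr fsh OmE] fsl])
    have A2: "reidx E t (reidx E (f s) OmE) = reidx E (comp C (f s) t) OmE"
      using r_comp[OF cat fibr th fsh OmE] by simp
    have A3: "reidx E t (meet E (pw n) Ps) = meet E X (reidx E t ` Ps)"
      by (rule r_meet[OF cat fibr th PsA])
    have tPsA: "reidx E t ` Ps \<subseteq> fib E X" using PsA r_fib[OF cat fibr th] by auto
    have A4: "leq E X G (meet E X (reidx E t ` Ps))"
    proof (rule f_mglb[OF cat fibr XO tPsA GA])
      fix y assume "y \<in> reidx E t ` Ps"
      then obtain i where i: "i < n" "y = reidx E t (reidx E (prj n i) OmE)" unfolding Ps_def by auto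
      have "y = reidx E (comp C (prj n i) t) OmE" using r_comp[OF cat fibr th prjh[OF i(1)] OmE] i by simp
      also have "\<dots> = reidx E (?sem (ps ! i)) OmE" using tc[OF i(1)] fsi[OF i(1)] by simp
      finally show "leq E X G y" using IH[OF i(1)] by simp
    qed
    have "leq E X G (reidx E (comp C (f s) t) OmE)"
      using f_trans[OF cat fibr XO GA _ _ A4] A1 A2 A3
        f_mA[OF cat fibr XO tPsA] ehA[OF semh] by auto
    then show ?case using semeq semh by simp
  next
    case (Mod l p)
    let ?sem = "sem C Ba pw prj rank f tau X x"
    have lL: "l \<in> Lam" and IH: "?sem p \<in> hom C X Om \<and> leq E X G (reidx E (?sem p) OmE)"
      using Mod by auto
    define h where "h = ?sem p"
    have hh: "h \<in> hom C X Om" using IH h_def by simp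
    have inL: "reidx E (comp C (tau l) (Ba h)) OmE \<in> L G"
      unfolding L_def ehom_def using lL hh IH h_def by blast
    have m1: "leq E (Bo X) (meet E (Bo X) (L G)) (reidx E (comp C (tau l) (Ba h)) OmE)"
      by (rule f_mlb[OF cat fibr BXO LA inL])
    have ctb: "comp C (tau l) (Ba h) \<in> hom C (Bo X) Om"
      by (rule comp_hom[OF cat fibr Bah[OF hh] tauh[OF lL]])
    have m2: "leq E X (F G) (reidx E x (reidx E (comp C (tau l) (Ba h)) OmE))"
      unfolding Fdef
      by (rule r_mono[OF cat fibr xh f_mA[OF cat fibr BXO LA] r_fib[OF cat fibr ctb OmE] m1])
    have eq: "reidx E x (reidx E (comp C (tau l) (Ba h)) OmE) = reidx E (?sem (Mod l p)) OmE"
      using r_comp[OF cat fibr xh ctb OmE] assoc[OF cat fibr xh Bah[OF hh] tauh[OF lL]]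
      by (simp add: h_def)
    have semh: "?sem (Mod l p) \<in> hom C X Om"
      using comp_hom[OF cat fibr comp_hom[OF cat fibr xh Bah[OF hh]] tauh[OF lL]] by (simp add: h_def)
    show ?case using m2 eq GF semh by simp
  qed
  define LE where "LE = {reidx E (sem C Ba pw prj rank f tau X x phi) OmE | phi. wf_formula Sig rank Lam phi}"
  have LEA: "LE \<subseteq> fib E X" unfolding LE_def using key ehA by blast
  have "leq E X G (meet E X LE)"
    by (rule f_mglb[OF cat fibr XO LEA GA]) (use key in \<open>auto simp: LE_def\<close>)
  then show ?thesis unfolding G_def LE_def logical_equiv_def .
qed

end
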